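(* Let $\mathbb{F}$ be a field, $p,q\in\mathbb{F}[t]$ monic of degree $2$, $\mathcal{W}_{p,q}=\mathbb{F}\langle a,b\rangle/(p(a),q(b))$. Let $\gamma\in\mathcal{W}_{p,q}^\times$ and let $x\in(\mathbb{F}[a]\cup\mathbb{F}[b])\setminus\mathbb{F}$ be a nonscalar basic vector. If $\gamma x\gamma^{-1}$ is basic (i.e. lies in $\mathbb{F}[a]\cup\mathbb{F}[b]$), then $\gamma x\gamma^{-1}=x$.
   Context: $\mathcal{W}_{p,q}$ is the quotient of the free associative unital $\mathbb{F}$-algebra on two noncommuting generators by the two-sided ideal generated by $p(a)$ and $q(b)$; $\mathbb{F}[a]$ and $\mathbb{F}[b]$ are $2$-dimensional subalgebras. *)

theory Defs
  imports "HOL-Computational_Algebra.Polynomial"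
begin

text \<open>The free associative unital algebra F<a,b> is modelled as finitely supported
  functions from words over the alphabet {a,b} (encoded as bool lists, True = a,
  False = b) to F, with concatenation-convolution product. The quotient W_{p,q}
  is handled via congruence modulo the two-sided ideal generated by p(a), q(b).\<close>

definition fa :: "(bool list \<Rightarrow> 'a::field) set" where
  "fa = {f. finite {w. f w \<noteq> 0}}"

definition fa_mult :: "(bool list \<Rightarrow> 'a::field) \<Rightarrow> (bool list \<Rightarrow> 'a) \<Rightarrow> bool list \<Rightarrow> 'a"
  (infixl "\<star>" 70) where
  "fa_mult f g w = (\<Sum>i\<le>length w. f (take i w) * g (drop i w))"

definition fa_sc :: "'a::field \<Rightarrow> bool list \<Rightarrow> 'a" where
  "fa_sc c w = (if w = [] then c else 0)"

definition gen_a :: "bool list \<Rightarrow> 'a::field" where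
  "gen_a w = (if w = [True] then 1 else 0)"

definition gen_b :: "bool list \<Rightarrow> 'a::field" where
  "gen_b w = (if w = [False] then 1 else 0)"

primrec fa_pow :: "(bool list \<Rightarrow> 'a::field) \<Rightarrow> nat \<Rightarrow> bool list \<Rightarrow> 'a" where
  "fa_pow x 0 = fa_sc 1"
| "fa_pow x (Suc n) = x \<star> fa_pow x n"

definition fa_poly :: "'a::field poly \<Rightarrow> (bool list \<Rightarrow> 'a) \<Rightarrow> bool list \<Rightarrow> 'a" where
  "fa_poly r x = (\<lambda>w. \<Sum>i\<le>degree r. (fa_sc (coeff r i) \<star> fa_pow x i) w)"

inductive_set W_ideal :: "'a::field poly \<Rightarrow> 'a poly \<Rightarrow> (bool list \<Rightarrow> 'a) set"
  for p q where
  gen_p: "fa_poly p gen_a \<in> W_ideal p q"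
| gen_q: "fa_poly q gen_b \<in> W_ideal p q"
| zero: "(\<lambda>w. 0) \<in> W_ideal p q"
| add: "u \<in> W_ideal p q \<Longrightarrow> v \<in> W_ideal p q \<Longrightarrow> (\<lambda>w. u w + v w) \<in> W_ideal p q"
| mult_left: "s \<in> fa \<Longrightarrow> u \<in> W_ideal p q \<Longrightarrow> s \<star> u \<in> W_ideal p q"
| mult_right: "s \<in> fa \<Longrightarrow> u \<in> W_ideal p q \<Longrightarrow> u \<star> s \<in> W_ideal p q"

definition W_eq :: "'a::field poly \<Rightarrow> 'a poly \<Rightarrow> (bool list \<Rightarrow> 'a) \<Rightarrow> (bool list \<Rightarrow> 'a) \<Rightarrow> bool" where
  "W_eq p q x y \<longleftrightarrow> (\<lambda>w. x w - y w) \<in> W_ideal p q"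

definition W_basic :: "'a::field poly \<Rightarrow> 'a poly \<Rightarrow> (bool list \<Rightarrow> 'a) \<Rightarrow> bool" where
  "W_basic p q x \<longleftrightarrow> (\<exists>r. W_eq p q x (fa_poly r gen_a) \<or> W_eq p q x (fa_poly r gen_b))"

definition W_scalar :: "'a::field poly \<Rightarrow> 'a poly \<Rightarrow> (bool list \<Rightarrow> 'a) \<Rightarrow> bool" where
  "W_scalar p q x \<longleftrightarrow> (\<exists>c. W_eq p q x (fa_sc c))"

end

theory Submission
  imports Defs
begin

definition gl :: "bool \<Rightarrow> bool list \<Rightarrow> 'a::field" where
  "gl c w = (if w = [c] then 1 else 0)"

lemma gen_a_gl: "gen_a = gl True" by (rule ext) (simp add: gen_a_def gl_def)
lemma gen_b_gl: "gen_b = gl False" by (rule ext) (simp add: gen_b_def gl_def)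

lemma fa_sc_mult: "fa_sc c \<star> g = (\<lambda>w. c * g w)"
proof (rule ext)
  fix w :: "bool list"
  show "(fa_sc c \<star> g) w = c * g w"
  proof (cases w)
    case Nil then show ?thesis by (simp add: fa_mult_def fa_sc_def)
  next
    case (Cons x xs)
    then show ?thesis unfolding fa_mult_def
      by (simp add: sum.atMost_Suc_shift fa_sc_def del: sum.atMost_Suc)
  qed
qed

lemma gl_mult: "gl c \<star> g = (\<lambda>w. if w \<noteq> [] \<and> hd w = c then g (tl w) else 0)"
proof (rule ext)
  fix w :: "bool list"
  show "(gl c \<star> g) w = (if w \<noteq> [] \<and> hd w = c then g (tl w) else 0)"
  proof (cases w)
    case Nil then show ?thesis by (simp add: fa_mult_def gl_def)
  next
    case (Cons x xs)
    have "\<And>i. i \<le> length xs \<Longrightarrow> gl c (take (Suc i) (x#xs)) * g (drop (Suc i) (x#xs))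
       = (if i = 0 then (if x = c then g xs else 0) else 0)"
      by (auto simp: gl_def)
    then have "(\<Sum>i\<le>length xs. gl c (take (Suc i) (x#xs)) * g (drop (Suc i) (x#xs)))
        = (\<Sum>i\<le>length xs. (if i = 0 then (if x = c then g xs else 0) else 0))"
      by (intro sum.cong) auto
    also have "\<dots> = (if x = c then g xs else 0)" by simp
    finally show ?thesis using Cons unfolding fa_mult_def
      by (simp add: sum.atMost_Suc_shift gl_def del: sum.atMost_Suc)
  qed
qed

lemma fa_pow_gl_pt: "fa_pow (gl c) n w = (if w = replicate n c then 1 else 0)"
proof (induction n arbitrary: w)
  case 0 then show ?case by (auto simp: fa_sc_def)
next
  case (Suc n)
  show ?case by (cases w) (auto simp: gl_mult Suc.IH)
qed

lemma fa_pow_gl: "fa_pow (gl c) n = (\<lambda>w. if w = replicate n c then 1 else 0)"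
  by (rule ext) (rule fa_pow_gl_pt)

definition pw :: "'a::field poly \<Rightarrow> bool \<Rightarrow> bool list \<Rightarrow> 'a" where
  "pw r c w = (if w = replicate (length w) c then coeff r (length w) else 0)"

lemma pw_rep: "pw r c (replicate k c) = coeff r k"
  by (simp add: pw_def)

lemma fa_poly_gl: "fa_poly r (gl c) = pw r c"
proof (rule ext)
  fix w :: "bool list"
  have 1: "fa_poly r (gl c) w = (\<Sum>i\<le>degree r. coeff r i * (if w = replicate i c then 1 else 0))"
    by (simp add: fa_poly_def fa_sc_mult fa_pow_gl)
  show "fa_poly r (gl c) w = pw r c w"
  proof (cases "w = replicate (length w) c")
    case True
    then obtain n where w: "w = replicate n c" by blast
    have "(\<Sum>i\<le>degree r. coeff r i * (if w = replicate i c then 1 else 0))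
        = (\<Sum>i\<le>degree r. (if n = i then coeff r i else 0))"
      unfolding w by (intro sum.cong) auto
    also have "\<dots> = coeff r n" by (auto simp: coeff_eq_0)
    finally show ?thesis using 1 by (simp add: w pw_rep)
  next
    case False
    have "\<And>i. w \<noteq> replicate i c" using False by auto
    then show ?thesis using 1 False by (simp add: pw_def)
  qed
qed

lemma pw_diff: "pw (r - s) c = (\<lambda>w. pw r c w - pw s c w)"
  by (rule ext) (simp add: pw_def)

lemma pw_mult: "pw (r * s) c = pw r c \<star> pw s c"
proof (rule ext)
  fix w :: "bool list"
  show "pw (r * s) c w = (pw r c \<star> pw s c) w"
  proof (cases "w = replicate (length w) c")
    case True
    then obtain n where w: "w = replicate n c" by blast
    have "(pw r c \<star> pw s c) w = (\<Sum>i\<le>n. coeff r i * coeff s (n - i))"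
      unfolding fa_mult_def w by (intro sum.cong) (auto simp: pw_rep)
    then show ?thesis by (simp add: coeff_mult w pw_rep)
  next
    case False
    have "\<And>i. i \<le> length w \<Longrightarrow> pw r c (take i w) * pw s c (drop i w) = 0"
    proof -
      fix i assume "i \<le> length w"
      have "\<not> (take i w = replicate (length (take i w)) c \<and> drop i w = replicate (length (drop i w)) c)"
      proof
        assume h: "take i w = replicate (length (take i w)) c \<and> drop i w = replicate (length (drop i w)) c"
        have "w = take i w @ drop i w" by simp
        also have "\<dots> = replicate (length (take i w)) c @ replicate (length (drop i w)) c"
          using h by (intro arg_cong2[of _ _ _ _ "(@)"]) (simp_all only:)
        also have "\<dots> = replicate (length (take i w) + length (drop i w)) c"
          by (simp only: replicate_add)
        also have "\<dots> = replicate (length w) c" by simp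
        finally show False using False by simp
      qed
      then consider "take i w \<noteq> replicate (length (take i w)) c" | "drop i w \<noteq> replicate (length (drop i w)) c"
        by blast
      then show "pw r c (take i w) * pw s c (drop i w) = 0"
      proof cases
        case 1 then have "pw r c (take i w) = 0" by (simp only: pw_def if_False)
        then show ?thesis by simp
      next
        case 2 then have "pw s c (drop i w) = 0" by (simp only: pw_def if_False)
        then show ?thesis by simp
      qed
    qed
    then have "(pw r c \<star> pw s c) w = 0" unfolding fa_mult_def by (intro sum.neutral) auto
    then show ?thesis using False by (simp add: pw_def)
  qed
qed

lemma pw_const_pt: "pw [:a:] c w = fa_sc a w"
  by (cases w) (simp_all add: pw_def fa_sc_def)

lemma pw_const: "pw [:a:] c = fa_sc a"
  by (rule ext) (rule pw_const_pt)


lemma fa_sc_in: "fa_sc c \<in> fa"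
proof -
  have "{w. fa_sc c w \<noteq> 0} \<subseteq> {[]}" by (auto simp: fa_sc_def split: if_splits)
  then show ?thesis unfolding fa_def by (auto intro: finite_subset)
qed

lemma pw_in: "pw r c \<in> fa"
proof -
  have "{w. pw r c w \<noteq> 0} \<subseteq> (\<lambda>k. replicate k c) ` {..degree r}"
  proof
    fix w assume "w \<in> {w. pw r c w \<noteq> 0}"
    then have h: "w = replicate (length w) c" "coeff r (length w) \<noteq> 0"
      by (auto simp: pw_def split: if_splits)
    then have "length w \<le> degree r" by (simp add: le_degree)
    with h(1) show "w \<in> (\<lambda>k. replicate k c) ` {..degree r}" by blast
  qed
  then show ?thesis unfolding fa_def by (auto intro: finite_subset)
qed

lemma diff_in: "u \<in> fa \<Longrightarrow> v \<in> fa \<Longrightarrow> (\<lambda>w. u w - v w) \<in> fa"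
  unfolding fa_def
  by (rule CollectI, rule finite_subset[of _ "{w. u w \<noteq> 0} \<union> {w. v w \<noteq> 0}"]) auto

lemma add_in: "u \<in> fa \<Longrightarrow> v \<in> fa \<Longrightarrow> (\<lambda>w. u w + v w) \<in> fa"
  unfolding fa_def
  by (rule CollectI, rule finite_subset[of _ "{w. u w \<noteq> 0} \<union> {w. v w \<noteq> 0}"]) auto

lemma supp_mult: "{w. (f \<star> g) w \<noteq> 0} \<subseteq> (\<lambda>(u,v). u @ v) ` ({w. f w \<noteq> 0} \<times> {w. g w \<noteq> 0})"
proof
  fix w assume "w \<in> {w. (f \<star> g) w \<noteq> 0}"
  then have "(\<Sum>i\<le>length w. f (take i w) * g (drop i w)) \<noteq> 0" by (simp add: fa_mult_def)
  then obtain i where "f (take i w) * g (drop i w) \<noteq> 0"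
    by (meson sum.not_neutral_contains_not_neutral)
  then have "(take i w, drop i w) \<in> {w. f w \<noteq> 0} \<times> {w. g w \<noteq> 0}" by auto
  moreover have "w = (\<lambda>(u,v). u @ v) (take i w, drop i w)" by simp
  ultimately show "w \<in> (\<lambda>(u,v). u @ v) ` ({w. f w \<noteq> 0} \<times> {w. g w \<noteq> 0})" by blast
qed

lemma mult_in: "f \<in> fa \<Longrightarrow> g \<in> fa \<Longrightarrow> f \<star> g \<in> fa"
  unfolding fa_def using supp_mult[of f g] by (auto intro: finite_subset)

lemma ideal_in: "u \<in> W_ideal p q \<Longrightarrow> u \<in> fa"
proof (induction rule: W_ideal.induct)
  case gen_p then show ?case by (simp add: gen_a_gl fa_poly_gl pw_in)
next
  case gen_q then show ?case by (simp add: gen_b_gl fa_poly_gl pw_in)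
next
  case zero then show ?case by (simp add: fa_def)
next
  case (add u v) then show ?case by (simp add: add_in)
next
  case (mult_left s u) then show ?case by (intro mult_in)
next
  case (mult_right s u) then show ?case by (intro mult_in)
qed

lemma W_eq_refl: "W_eq p q x x"
  unfolding W_eq_def using W_ideal.zero by simp

lemma W_eq_sym: assumes "W_eq p q x y" shows "W_eq p q y x"
proof -
  have "fa_sc (-1) \<star> (\<lambda>w. x w - y w) \<in> W_ideal p q"
    using assms unfolding W_eq_def by (intro W_ideal.mult_left fa_sc_in)
  then show ?thesis unfolding W_eq_def fa_sc_mult by simp
qed

lemma W_eq_trans: assumes "W_eq p q x y" "W_eq p q y z" shows "W_eq p q x z"
proof -
  have "(\<lambda>w. (x w - y w) + (y w - z w)) \<in> W_ideal p q"
    using assms unfolding W_eq_def by (intro W_ideal.add)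
  then show ?thesis unfolding W_eq_def by simp
qed

lemma W_eq_pw_a: assumes "p dvd (r - s)" shows "W_eq p q (pw r True) (pw s True)"
proof -
  obtain k where k: "r - s = p * k" using assms by blast
  have "pw p True \<star> pw k True \<in> W_ideal p q"
    using W_ideal.gen_p[of p q] by (intro W_ideal.mult_right pw_in) (simp add: gen_a_gl fa_poly_gl)
  then show ?thesis unfolding W_eq_def by (simp add: pw_diff[symmetric] k pw_mult)
qed

lemma W_eq_pw_b: assumes "q dvd (r - s)" shows "W_eq p q (pw r False) (pw s False)"
proof -
  obtain k where k: "r - s = q * k" using assms by blast
  have "pw q False \<star> pw k False \<in> W_ideal p q"
    using W_ideal.gen_q[of q p] by (intro W_ideal.mult_right pw_in) (simp add: gen_b_gl fa_poly_gl)
  then show ?thesis unfolding W_eq_def by (simp add: pw_diff[symmetric] k pw_mult)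
qed


definition cc :: "'a::field \<Rightarrow> 'a poly poly" where "cc c = [:[:c:]:]"

lemma cc_0[simp]: "cc 0 = 0" by (simp add: cc_def)
lemma cc_1[simp]: "cc 1 = 1" by (simp add: cc_def one_pCons)
lemma cc_add: "cc (a + b) = cc a + cc b" by (simp add: cc_def)
lemma cc_diff: "cc (a - b) = cc a - cc b" by (simp add: cc_def)
lemma cc_mult: "cc (a * b) = cc a * cc b" by (simp add: cc_def)
lemma cc_sum: "cc (sum f A) = (\<Sum>x\<in>A. cc (f x))"
  by (induction A rule: infinite_finite_induct) (simp_all add: cc_add)

primrec mon :: "bool list \<Rightarrow> 'a::field poly poly" where
  "mon [] = 1"
| "mon (x # xs) = (if x then [:[:0, 1:]:] else [:0, 1:]) * mon xs"

lemma mon_append: "mon (u @ v) = mon u * mon v"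
  by (induction u) (simp_all add: mult.assoc)

lemma mon_replicate: "mon (replicate k c) = mon [c] ^ k"
  by (induction k) simp_all

definition chi :: "(bool list \<Rightarrow> 'a::field) \<Rightarrow> 'a poly poly" where
  "chi f = (\<Sum>w\<in>{w. f w \<noteq> 0}. cc (f w) * mon w)"

lemma chi_superset: "finite S \<Longrightarrow> {w. f w \<noteq> 0} \<subseteq> S \<Longrightarrow> chi f = (\<Sum>w\<in>S. cc (f w) * mon w)"
  unfolding chi_def by (rule sum.mono_neutral_left) auto

lemma chi_diff:
  assumes "u \<in> fa" "v \<in> fa" shows "chi (\<lambda>w. u w - v w) = chi u - chi v"
proof -
  let ?S = "{w. u w \<noteq> 0} \<union> {w. v w \<noteq> 0}"
  have f: "finite ?S" using assms by (simp add: fa_def)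
  have "chi (\<lambda>w. u w - v w) = (\<Sum>w\<in>?S. cc (u w - v w) * mon w)"
    by (rule chi_superset[OF f]) auto
  also have "\<dots> = (\<Sum>w\<in>?S. cc (u w) * mon w) - (\<Sum>w\<in>?S. cc (v w) * mon w)"
    by (simp add: cc_diff left_diff_distrib sum_subtractf)
  also have "\<dots> = chi u - chi v"
    by (simp add: chi_superset[OF f, of u] chi_superset[OF f, of v])
  finally show ?thesis .
qed

lemma chi_add:
  assumes "u \<in> fa" "v \<in> fa" shows "chi (\<lambda>w. u w + v w) = chi u + chi v"
proof -
  let ?S = "{w. u w \<noteq> 0} \<union> {w. v w \<noteq> 0}"
  have f: "finite ?S" using assms by (simp add: fa_def)
  have "chi (\<lambda>w. u w + v w) = (\<Sum>w\<in>?S. cc (u w + v w) * mon w)"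
    by (rule chi_superset[OF f]) auto
  also have "\<dots> = (\<Sum>w\<in>?S. cc (u w) * mon w) + (\<Sum>w\<in>?S. cc (v w) * mon w)"
    by (simp add: cc_add distrib_right sum.distrib)
  also have "\<dots> = chi u + chi v"
    by (simp add: chi_superset[OF f, of u] chi_superset[OF f, of v])
  finally show ?thesis .
qed

lemma chi_zero: "chi (\<lambda>w. 0) = 0" by (simp add: chi_def)

lemma chi_sc: "chi (fa_sc c) = cc c"
  by (subst chi_superset[of "{[]}"]) (auto simp: fa_sc_def split: if_splits)

lemma mult_pt:
  assumes T: "T = {w. f w \<noteq> 0} \<times> {w. g w \<noteq> 0}"
  shows "(f \<star> g) w = (\<Sum>x\<in>{x\<in>T. (\<lambda>(u,v). u @ v) x = w}. f (fst x) * g (snd x))"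
proof -
  let ?I = "{i. i \<le> length w \<and> (take i w, drop i w) \<in> T}"
  let ?k = "\<lambda>i. (take i w, drop i w)"
  have "(f \<star> g) w = (\<Sum>i\<in>?I. f (take i w) * g (drop i w))"
    unfolding fa_mult_def by (rule sum.mono_neutral_right) (auto simp: T)
  also have "\<dots> = (\<Sum>x\<in>?k ` ?I. f (fst x) * g (snd x))"
  proof (subst sum.reindex)
    show "inj_on ?k ?I"
    proof (rule inj_onI)
      fix i j assume "i \<in> ?I" "j \<in> ?I" "?k i = ?k j"
      then have "length (take i w) = length (take j w)" "i \<le> length w" "j \<le> length w" by auto
      then show "i = j" by simp
    qed
  qed simp
  also have "?k ` ?I = {x\<in>T. (\<lambda>(u,v). u @ v) x = w}"
  proof
    show "?k ` ?I \<subseteq> {x\<in>T. (\<lambda>(u,v). u @ v) x = w}" by auto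
    show "{x\<in>T. (\<lambda>(u,v). u @ v) x = w} \<subseteq> ?k ` ?I"
    proof
      fix x assume x: "x \<in> {x\<in>T. (\<lambda>(u,v). u @ v) x = w}"
      obtain u v where uv: "x = (u, v)" by (cases x)
      with x have "w = u @ v" "(u, v) \<in> T" by auto
      then have "x = ?k (length u)" "length u \<in> ?I" using uv by auto
      then show "x \<in> ?k ` ?I" by blast
    qed
  qed
  finally show ?thesis .
qed

lemma chi_mult:
  assumes "f \<in> fa" "g \<in> fa" shows "chi (f \<star> g) = chi f * chi g"
proof -
  define T where "T = {w. f w \<noteq> 0} \<times> {w. g w \<noteq> 0}"
  define h where "h = (\<lambda>(u::bool list,v::bool list). u @ v)"
  have fT: "finite T" using assms by (simp add: T_def fa_def)
  have fS: "finite (h ` T)" using fT by simp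
  have sub: "{w. (f \<star> g) w \<noteq> 0} \<subseteq> h ` T" using supp_mult[of f g] by (simp add: T_def h_def)
  have "chi (f \<star> g) = (\<Sum>w\<in>h ` T. cc ((f \<star> g) w) * mon w)"
    by (rule chi_superset[OF fS sub])
  also have "\<dots> = (\<Sum>w\<in>h ` T. (\<Sum>x\<in>{x\<in>T. h x = w}. cc (f (fst x) * g (snd x)) * mon (h x)))"
  proof (rule sum.cong[OF refl])
    fix w assume "w \<in> h ` T"
    have "cc ((f \<star> g) w) * mon w = (\<Sum>x\<in>{x\<in>T. h x = w}. cc (f (fst x) * g (snd x))) * mon w"
      by (simp add: mult_pt[OF T_def] h_def cc_sum)
    also have "\<dots> = (\<Sum>x\<in>{x\<in>T. h x = w}. cc (f (fst x) * g (snd x)) * mon (h x))"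
      by (simp add: sum_distrib_right)
    finally show "cc ((f \<star> g) w) * mon w = (\<Sum>x\<in>{x\<in>T. h x = w}. cc (f (fst x) * g (snd x)) * mon (h x))" .
  qed
  also have "\<dots> = (\<Sum>x\<in>T. cc (f (fst x) * g (snd x)) * mon (h x))"
    by (rule sum.group[OF fT fS]) simp
  also have "\<dots> = (\<Sum>x\<in>T. (cc (f (fst x)) * mon (fst x)) * (cc (g (snd x)) * mon (snd x)))"
    by (rule sum.cong[OF refl]) (auto simp: h_def cc_mult mon_append ac_simps)
  also have "\<dots> = (\<Sum>u\<in>{w. f w \<noteq> 0}. cc (f u) * mon u) * (\<Sum>v\<in>{w. g w \<noteq> 0}. cc (g v) * mon v)"
    by (simp add: T_def sum_product sum.cartesian_product split_beta)
  also have "\<dots> = chi f * chi g" by (simp add: chi_def)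
  finally show ?thesis .
qed


definition E :: "'a::field poly \<Rightarrow> 'a poly poly \<Rightarrow> 'a poly poly" where
  "E r X = (\<Sum>k\<le>degree r. cc (coeff r k) * X ^ k)"

lemma chi_pw: "chi (pw r c) = E r (mon [c])"
proof -
  let ?S = "(\<lambda>k. replicate k c) ` {..degree r}"
  have sub: "{w. pw r c w \<noteq> 0} \<subseteq> ?S"
  proof
    fix w assume "w \<in> {w. pw r c w \<noteq> 0}"
    then have h: "w = replicate (length w) c" "coeff r (length w) \<noteq> 0"
      by (auto simp: pw_def split: if_splits)
    then have "length w \<le> degree r" by (simp add: le_degree)
    with h(1) show "w \<in> ?S" by blast
  qed
  have inj: "inj_on (\<lambda>k. replicate k c) {..degree r}"
    by (rule inj_onI) (metis length_replicate)
  have "chi (pw r c) = (\<Sum>w\<in>?S. cc (pw r c w) * mon w)"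
    by (rule chi_superset[OF _ sub]) simp
  also have "\<dots> = (\<Sum>k\<le>degree r. cc (pw r c (replicate k c)) * mon (replicate k c))"
    by (subst sum.reindex[OF inj]) simp
  also have "\<dots> = E r (mon [c])"
    by (simp add: E_def pw_rep mon_replicate del: mon.simps)
  finally show ?thesis .
qed

lemma pconst_sum: "[:sum f A:] = (\<Sum>x\<in>A. [:f x:])"
proof (induction A rule: infinite_finite_induct)
  case (insert x F)
  have "[:sum f (insert x F):] = [:f x + sum f F:]" using insert by simp
  also have "\<dots> = [:f x:] + [:sum f F:]" by simp
  also have "\<dots> = [:f x:] + (\<Sum>x\<in>F. [:f x:])" by (simp only: insert.IH)
  also have "\<dots> = (\<Sum>x\<in>insert x F. [:f x:])" using insert by simp
  finally show ?case .
qed simp_all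

lemma E_U: "E r [:[:0, 1:]:] = [:r:]"
proof -
  have "E r [:[:0, 1:]:] = (\<Sum>k\<le>degree r. [:monom (coeff r k) k:])"
    unfolding E_def by (intro sum.cong) (simp_all add: cc_def poly_const_pow monom_altdef)
  also have "\<dots> = [:r:]" by (simp add: pconst_sum[symmetric] poly_as_sum_of_monoms)
  finally show ?thesis .
qed

lemma E_V_coeff: "coeff (E r [:0, 1:]) n = [:coeff r n:]"
proof -
  have "E r [:0, 1:] = (\<Sum>k\<le>degree r. monom [:coeff r k:] k)"
    unfolding E_def by (intro sum.cong) (simp_all add: cc_def monom_altdef)
  then have "coeff (E r [:0, 1:]) n = (\<Sum>k\<le>degree r. (if k = n then [:coeff r k:] else 0))"
    by (simp add: coeff_sum coeff_monom)
  also have "\<dots> = [:coeff r n:]" by (auto simp: coeff_eq_0)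
  finally show ?thesis .
qed

definition inI :: "'a::field poly \<Rightarrow> 'a poly \<Rightarrow> 'a poly poly \<Rightarrow> bool" where
  "inI p q f \<longleftrightarrow> (\<exists>A B. f = [:p:] * A + map_poly (\<lambda>c. [:c:]) q * B)"

lemma inI_add: "inI p q f \<Longrightarrow> inI p q g \<Longrightarrow> inI p q (f + g)"
proof -
  assume "inI p q f" "inI p q g"
  then obtain A B A' B' where "f = [:p:] * A + map_poly (\<lambda>c. [:c:]) q * B"
    "g = [:p:] * A' + map_poly (\<lambda>c. [:c:]) q * B'" unfolding inI_def by blast
  then have "f + g = [:p:] * (A + A') + map_poly (\<lambda>c. [:c:]) q * (B + B')"
    by (simp add: algebra_simps smult_add_right)
  then show ?thesis unfolding inI_def by blast
qed

lemma inI_diff: "inI p q f \<Longrightarrow> inI p q g \<Longrightarrow> inI p q (f - g)"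
proof -
  assume "inI p q f" "inI p q g"
  then obtain A B A' B' where "f = [:p:] * A + map_poly (\<lambda>c. [:c:]) q * B"
    "g = [:p:] * A' + map_poly (\<lambda>c. [:c:]) q * B'" unfolding inI_def by blast
  then have "f - g = [:p:] * (A - A') + map_poly (\<lambda>c. [:c:]) q * (B - B')"
    by (simp add: algebra_simps smult_diff_right)
  then show ?thesis unfolding inI_def by blast
qed

lemma inI_mult: "inI p q f \<Longrightarrow> inI p q (h * f)"
proof -
  assume "inI p q f"
  then obtain A B where "f = [:p:] * A + map_poly (\<lambda>c. [:c:]) q * B" unfolding inI_def by blast
  then have "h * f = [:p:] * (h * A) + map_poly (\<lambda>c. [:c:]) q * (h * B)"
    by (simp add: algebra_simps)
  then show ?thesis unfolding inI_def by blast
qed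

lemma E_q: "E q [:0, 1:] = map_poly (\<lambda>c. [:c:]) q"
  by (rule poly_eqI) (simp add: E_V_coeff coeff_map_poly)

lemma chi_ideal: "u \<in> W_ideal p q \<Longrightarrow> inI p q (chi u)"
proof (induction rule: W_ideal.induct)
  case gen_p
  have "chi (fa_poly p gen_a) = [:p:] * 1 + map_poly (\<lambda>c. [:c:]) q * 0"
    by (simp add: gen_a_gl fa_poly_gl chi_pw E_U)
  then show ?case unfolding inI_def by blast
next
  case gen_q
  have "chi (fa_poly q gen_b) = [:p:] * 0 + map_poly (\<lambda>c. [:c:]) q * 1"
    by (simp add: gen_b_gl fa_poly_gl chi_pw E_q)
  then show ?case unfolding inI_def by blast
next
  case zero
  have "chi (\<lambda>w. 0::'a) = [:p:] * 0 + map_poly (\<lambda>c. [:c:]) q * 0" by (simp add: chi_zero)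
  then show ?case unfolding inI_def by blast
next
  case (add u v)
  then show ?case by (simp add: chi_add ideal_in inI_add)
next
  case (mult_left s u)
  then show ?case by (simp add: chi_mult ideal_in inI_mult)
next
  case (mult_right s u)
  then show ?case by (simp add: chi_mult ideal_in inI_mult mult.commute[of "chi u"])
qed

lemma chi_W_eq: "W_eq p q u v \<Longrightarrow> u \<in> fa \<Longrightarrow> v \<in> fa \<Longrightarrow> inI p q (chi u - chi v)"
  unfolding W_eq_def using chi_ideal chi_diff by metis


lemma key:
  fixes p q :: "'a::field poly" and f :: "'a poly poly"
  assumes dp: "degree p = 2" and dq: "degree q = 2" and I: "inI p q f"
    and df: "degree f \<le> 1" and dc: "\<And>k. degree (coeff f k) \<le> 1"
  shows "f = 0"
proof -
  define Q where "Q = map_poly (\<lambda>c. [:c:]) q"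
  obtain A B where f: "f = [:p:] * A + Q * B" using I unfolding inI_def Q_def by blast
  have p0: "p \<noteq> 0" using dp by auto
  define B0 where "B0 = map_poly (\<lambda>c. c mod p) B"
  define B1 where "B1 = map_poly (\<lambda>c. c div p) B"
  have B: "B = [:p:] * B1 + B0"
    by (rule poly_eqI) (simp add: B0_def B1_def coeff_map_poly)
  define A' where "A' = A + Q * B1"
  have f2: "f - Q * B0 = [:p:] * A'" unfolding f A'_def by (subst B) (simp add: algebra_simps)
  have cQ: "\<And>i. coeff Q i = [:coeff q i:]" by (simp add: Q_def coeff_map_poly)
  have dB0: "\<And>j. degree (coeff B0 j) \<le> 1"
  proof -
    fix j
    have "coeff B0 j = coeff B j mod p" by (simp add: B0_def coeff_map_poly)
    then show "degree (coeff B0 j) \<le> 1" using degree_mod_less[OF p0, of "coeff B j"] dp by auto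
  qed
  have dQB0: "\<And>n. degree (coeff (Q * B0) n) \<le> 1"
  proof -
    fix n
    have "coeff (Q * B0) n = (\<Sum>i\<le>n. smult (coeff q i) (coeff B0 (n - i)))"
      by (simp add: coeff_mult cQ)
    also have "degree \<dots> \<le> 1"
    proof (rule degree_sum_le)
      fix i show "degree (smult (coeff q i) (coeff B0 (n - i))) \<le> 1"
        by (rule order.trans[OF degree_smult_le dB0])
    qed simp
    finally show "degree (coeff (Q * B0) n) \<le> 1" .
  qed
  have A'0: "A' = 0"
  proof (rule poly_eqI)
    fix n
    have e: "coeff (f - Q * B0) n = p * coeff A' n" by (simp add: f2)
    have "degree (coeff (f - Q * B0) n) \<le> 1"
      using degree_diff_le[OF dc dQB0] by simp
    show "coeff A' n = coeff 0 n"
    proof (rule ccontr)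
      assume "coeff A' n \<noteq> coeff 0 n"
      then have "coeff A' n \<noteq> 0" by simp
      then have "degree (p * coeff A' n) = 2 + degree (coeff A' n)"
        using p0 dp by (simp add: degree_mult_eq)
      then show False using \<open>degree (coeff (f - Q * B0) n) \<le> 1\<close> e by simp
    qed
  qed
  have fQ: "f = Q * B0" using f2 A'0 by simp
  have "q \<noteq> 0" using dq by auto
  then have "coeff q (degree q) \<noteq> 0" by simp
  then have "coeff Q 2 \<noteq> 0" using dq by (simp add: cQ)
  then have Q0: "Q \<noteq> 0" and dQ: "degree Q \<ge> 2" by (auto intro: le_degree)
  show "f = 0"
  proof (cases "B0 = 0")
    case True then show ?thesis using fQ by simp
  next
    case False
    then have "degree f = degree Q + degree B0" using fQ Q0 by (simp add: degree_mult_eq)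
    then show ?thesis using dQ df by simp
  qed
qed

lemma E_deg:
  assumes "degree r \<le> 1"
  shows "degree (E r (mon [c])) \<le> 1 \<and> (\<forall>n. degree (coeff (E r (mon [c])) n) \<le> 1)"
proof (cases c)
  case True
  then have e: "E r (mon [c]) = [:r:]" by (simp add: E_U)
  show ?thesis unfolding e using assms by (simp add: coeff_pCons split: nat.split)
next
  case False
  then have m: "mon [c] = [:0, 1:]" by simp
  have "degree (E r [:0, 1:]) \<le> 1"
    by (rule degree_le) (use assms in \<open>auto simp: E_V_coeff coeff_eq_0\<close>)
  moreover have "\<forall>n. degree (coeff (E r [:0, 1:]) n) \<le> 1" by (simp add: E_V_coeff)
  ultimately show ?thesis unfolding m by blast
qed

lemma E_inj:
  assumes "degree r \<le> 1" "degree s \<le> 1" "E s (mon [c']) = E r (mon [c])"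
  shows "(s = r \<and> c' = c) \<or> coeff r 1 = 0"
proof (cases c)
  case True
  note cT = True
  show ?thesis
  proof (cases c')
    case True then show ?thesis using assms cT by (simp add: E_U)
  next
    case False
    then have "E s [:0, 1:] = [:r:]" using assms cT by (simp add: E_U)
    then have "coeff (E s [:0, 1:]) 0 = r" by simp
    then have "r = [:coeff s 0:]" by (simp add: E_V_coeff)
    then show ?thesis by simp
  qed
next
  case False
  note cF = False
  show ?thesis
  proof (cases c')
    case True
    then have "[:s:] = E r [:0, 1:]" using assms cF by (simp add: E_U)
    then have "coeff (E r [:0, 1:]) 1 = 0" by (metis coeff_pCons_Suc coeff_0 One_nat_def pCons_0_0)
    then show ?thesis by (simp add: E_V_coeff)
  next
    case False
    then have "E s [:0, 1:] = E r [:0, 1:]" using assms cF by simp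
    then have "\<And>n. [:coeff s n:] = [:coeff r n:]" by (metis E_V_coeff)
    then have "s = r" by (intro poly_eqI) simp
    then show ?thesis using False cF by simp
  qed
qed

lemma basic_red:
  assumes dp: "degree p = 2" and dq: "degree q = 2" and b: "W_basic p q z"
  shows "\<exists>r c. degree r \<le> 1 \<and> W_eq p q z (pw r c)"
proof -
  have p0: "p \<noteq> 0" and q0: "q \<noteq> 0" using dp dq by auto
  obtain r where "W_eq p q z (pw r True) \<or> W_eq p q z (pw r False)"
    using b unfolding W_basic_def gen_a_gl gen_b_gl fa_poly_gl by blast
  then show ?thesis
  proof
    assume h: "W_eq p q z (pw r True)"
    have "p dvd (r - r mod p)" by (simp add: minus_mod_eq_mult_div)
    then have "W_eq p q (pw r True) (pw (r mod p) True)" by (rule W_eq_pw_a)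
    with h have "W_eq p q z (pw (r mod p) True)" by (rule W_eq_trans)
    moreover have "degree (r mod p) \<le> 1" using degree_mod_less[OF p0, of r] dp by auto
    ultimately show ?thesis by blast
  next
    assume h: "W_eq p q z (pw r False)"
    have "q dvd (r - r mod q)" by (simp add: minus_mod_eq_mult_div)
    then have "W_eq p q (pw r False) (pw (r mod q) False)" by (rule W_eq_pw_b)
    with h have "W_eq p q z (pw (r mod q) False)" by (rule W_eq_trans)
    moreover have "degree (r mod q) \<le> 1" using degree_mod_less[OF q0, of r] dq by auto
    ultimately show ?thesis by blast
  qed
qed

lemma scalar_of:
  assumes "degree r \<le> 1" "coeff r 1 = 0" "W_eq p q z (pw r c)"
  shows "W_scalar p q z"
proof -
  have "r = [:coeff r 0:]"
  proof (rule poly_eqI)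
    fix n show "coeff r n = coeff [:coeff r 0:] n"
    proof (cases "n \<le> 1")
      case True
      then have "n = 0 \<or> n = 1" by auto
      then show ?thesis using assms(2) by auto
    next
      case False
      then show ?thesis using assms(1) by (simp add: coeff_eq_0)
    qed
  qed
  then have "pw r c = fa_sc (coeff r 0)" by (metis pw_const)
  then show ?thesis using assms(3) unfolding W_scalar_def by auto
qed

theorem mainTheorem14:
  fixes p q :: "'a::field poly" and \<gamma> \<delta> x :: "bool list \<Rightarrow> 'a"
  assumes "degree p = 2" and "lead_coeff p = 1"
    and "degree q = 2" and "lead_coeff q = 1"
    and "\<gamma> \<in> fa" and "\<delta> \<in> fa" and "x \<in> fa"
    and "W_eq p q (\<gamma> \<star> \<delta>) (fa_sc 1)" and "W_eq p q (\<delta> \<star> \<gamma>) (fa_sc 1)"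
    and "W_basic p q x" and "\<not> W_scalar p q x"
    and "W_basic p q (\<gamma> \<star> x \<star> \<delta>)"
  shows "W_eq p q (\<gamma> \<star> x \<star> \<delta>) x"
proof -
  note dp = assms(1) and dq = assms(3)
  define y where "y = \<gamma> \<star> x \<star> \<delta>"
  have gx: "\<gamma> \<star> x \<in> fa" using assms(5,7) by (rule mult_in)
  have yfa: "y \<in> fa" unfolding y_def using gx assms(6) by (rule mult_in)
  obtain rx cx where rx: "degree rx \<le> 1" "W_eq p q x (pw rx cx)"
    using basic_red[OF dp dq assms(10)] by blast
  obtain ry cy where ry: "degree ry \<le> 1" "W_eq p q y (pw ry cy)"
    using basic_red[OF dp dq assms(12)] unfolding y_def by blast
  have c1: "coeff rx 1 \<noteq> 0" using scalar_of[OF rx(1) _ rx(2)] assms(11) by blast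
  have h1: "inI p q (chi y - E ry (mon [cy]))"
    using chi_W_eq[OF ry(2) yfa pw_in] by (simp add: chi_pw)
  have h2: "inI p q (chi x - E rx (mon [cx]))"
    using chi_W_eq[OF rx(2) assms(7) pw_in] by (simp add: chi_pw)
  have h3: "inI p q (chi \<gamma> * chi \<delta> - 1)"
    using chi_W_eq[OF assms(8) mult_in[OF assms(5,6)] fa_sc_in]
    by (simp add: chi_mult[OF assms(5,6)] chi_sc)
  have cy: "chi y = chi \<gamma> * chi x * chi \<delta>"
    unfolding y_def by (simp add: chi_mult[OF gx assms(6)] chi_mult[OF assms(5,7)])
  have "E ry (mon [cy]) - E rx (mon [cx])
      = (chi x - E rx (mon [cx])) - (chi y - E ry (mon [cy])) + chi x * (chi \<gamma> * chi \<delta> - 1)"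
    by (simp add: cy algebra_simps)
  moreover have "inI p q ((chi x - E rx (mon [cx])) - (chi y - E ry (mon [cy])) + chi x * (chi \<gamma> * chi \<delta> - 1))"
    by (rule inI_add[OF inI_diff[OF h2 h1] inI_mult[OF h3]])
  ultimately have "inI p q (E ry (mon [cy]) - E rx (mon [cx]))" by (simp only:)
  moreover have "degree (E ry (mon [cy]) - E rx (mon [cx])) \<le> 1"
    using E_deg[OF ry(1)] E_deg[OF rx(1)] by (meson degree_diff_le)
  moreover have "\<And>k. degree (coeff (E ry (mon [cy]) - E rx (mon [cx])) k) \<le> 1"
    using E_deg[OF ry(1)] E_deg[OF rx(1)] by (simp add: degree_diff_le)
  ultimately have "E ry (mon [cy]) - E rx (mon [cx]) = 0" by (intro key[OF dp dq])
  then have "(ry = rx \<and> cy = cx) \<or> coeff rx 1 = 0"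
    by (intro E_inj[OF rx(1) ry(1)]) simp
  then have "ry = rx \<and> cy = cx" using c1 by blast
  then have "W_eq p q y (pw rx cx)" using ry(2) by simp
  then have "W_eq p q y x" using W_eq_sym[OF rx(2)] by (rule W_eq_trans)
  then show ?thesis unfolding y_def .
qed

end
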